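(* For all finite sets of formulas $\Gamma,\Delta$: if the sequent $\Gamma\Rightarrow\Delta$ is provable in $\mathsf{CLp}$, then $\Gamma\Vdash\Delta$.
   Context: Fix a countably infinite set $\mathsf{At}$ of atoms. Formulas are built from atoms and the constant $\bot$ using the binary connectives $\land,\lor,\to$. All contexts are finite sets (not multisets) of formulas; a comma denotes union; a subscript $\mathsf{At}$ indicates a finite set of atoms. An atomic sequent has the form $\Gamma_{\mathsf{At}} \Rightarrow \Delta_{\mathsf{At}}$. An atomic rule has finitely many (possibly zero) atomic sequents as premises and one atomic sequent as conclusion; a rule with zero premises is an atomic axiom. A base is a (possibly empty) set of atomic rules; $\mathcal{C}\supseteq\mathcal{B}$ ($\mathcal{C}$ extends $\mathcal{B}$) if $\mathcal{C}$ contains every rule of $\mathcal{B}$. Derivability $\vdash_{\mathcal{B}}$ of atomic sequents is the least relation such that: (Axiom/Weakening) if an atomic axiom with conclusion $\Gamma_{\mathsf{At}}\Rightarrow\Delta_{\mathsf{At}}$ is in $\mathcal{B}$, then $\vdash_{\mathcal{B}} \Theta_{\mathsf{At}},\Gamma_{\mathsf{At}}\Rightarrow\Delta_{\mathsf{At}},\Sigma_{\mathsf{At}}$ for all sets of atoms $\Theta_{\mathsf{At}},\Sigma_{\mathsf{At}}$; (Mix) if a rule with premises $\Gamma^i_{\mathsf{At}}\Rightarrow\Delta^i_{\mathsf{At}}$ ($1\le i\le n$) and conclusion $\Gamma_{\mathsf{At}}\Rightarrow\Delta_{\mathsf{At}}$ is in $\mathcal{B}$ and $\vdash_{\mathcal{B}}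 \Theta^i_{\mathsf{At}},\Gamma^i_{\mathsf{At}}\Rightarrow\Delta^i_{\mathsf{At}},\Sigma^i_{\mathsf{At}}$ for each $i$, then $\vdash_{\mathcal{B}} \Theta^1_{\mathsf{At}},\dots,\Theta^n_{\mathsf{At}},\Gamma_{\mathsf{At}}\Rightarrow\Delta_{\mathsf{At}},\Sigma^1_{\mathsf{At}},\dots,\Sigma^n_{\mathsf{At}}$. Support $\Vdash_{\mathcal{B}}$: (At) $\Vdash_{\mathcal{B}}\Gamma_{\mathsf{At}}$ iff $\vdash_{\mathcal{B}}\ \Rightarrow\Gamma_{\mathsf{At}}$; ($\land$) $\Vdash_{\mathcal{B}} A\land B,\Gamma$ iff $\Vdash_{\mathcal{B}}A,\Gamma$ and $\Vdash_{\mathcal{B}}B,\Gamma$; ($\lor$) $\Vdash_{\mathcal{B}}A\lor B,\Gamma$ iff $\Vdash_{\mathcal{B}}A,B,\Gamma$; ($\to$) $\Vdash_{\mathcal{B}}A\to B,\Gamma$ iff $A\Vdash_{\mathcal{B}}B,\Gamma$; ($\bot$) $\Vdash_{\mathcal{B}}\bot,\Gamma$ iff $\Vdash_{\mathcal{B}}\Gamma$; (Inf) for $n\ge1$, $\{A^1,\dots,A^n\}\Vdash_{\mathcal{B}}\Delta$ iff for every $\mathcal{C}\supseteq\mathcal{B}$ and all sets of atoms $\Theta^1_{\mathsf{At}},\dots,\Theta^n_{\mathsf{At}}$, if $\Vdash_{\mathcal{C}}\Theta^i_{\mathsf{At}},A^i$ for all $i$ then $\Vdash_{\mathcal{C}}\Theta^1_{\mathsf{At}},\dots,\Theta^n_{\mathsf{At}},\Delta$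 (and $\varnothing\Vdash_{\mathcal{B}}\Delta$ means $\Vdash_{\mathcal{B}}\Delta$). The atomic identity rule $\mathsf{Ainit}$ is the atomic axiom $\Gamma_{\mathsf{At}},p\Rightarrow p,\Delta_{\mathsf{At}}$; the atomic cut rule $\mathsf{Acut}$ has premises $\Gamma^1_{\mathsf{At}}\Rightarrow\Delta^1_{\mathsf{At}},p$ and $p,\Gamma^2_{\mathsf{At}}\Rightarrow\Delta^2_{\mathsf{At}}$ and conclusion $\Gamma^1_{\mathsf{At}},\Gamma^2_{\mathsf{At}}\Rightarrow\Delta^1_{\mathsf{At}},\Delta^2_{\mathsf{At}}$. $\mathcal{ST}$ is the base consisting of all instances of $\mathsf{Ainit}$ and $\mathsf{Acut}$ (all atoms $p$, all sets of atoms). Validity: $\Gamma\Vdash\Delta$ iff $\Gamma\Vdash_{\mathcal{B}}\Delta$ for every base $\mathcal{B}\supseteq\mathcal{ST}$. $\mathsf{CLp}$ is the sequent calculus on sequents $\Gamma\Rightarrow\Delta$ (finite sets of formulas) with rules: $\mathsf{init}$: $\Gamma,A\Rightarrow A,\Delta$; $L\bot$: $\Gamma,\bot\Rightarrow\Delta$; $R\bot$: from $\Gamma\Rightarrow\Delta$ infer $\Gamma\Rightarrow\bot,\Delta$; $L\land$: from $A,B,\Gamma\Rightarrow\Delta$ infer $A\land B,\Gamma\Rightarrow\Delta$; $R\land$: from $\Gamma\Rightarrow\Delta,A$ and $\Gamma'\Rightarrow\Delta',B$ infer $\Gamma,\Gamma'\Rightarrow\Delta,\Delta',A\land B$; $L\lor$: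 from $A,\Gamma\Rightarrow\Delta$ and $B,\Gamma'\Rightarrow\Delta'$ infer $A\lor B,\Gamma,\Gamma'\Rightarrow\Delta,\Delta'$; $R\lor$: from $\Gamma\Rightarrow\Delta,A,B$ infer $\Gamma\Rightarrow\Delta,A\lor B$; $L\to$: from $\Gamma\Rightarrow\Delta,A$ and $B,\Gamma'\Rightarrow\Delta'$ infer $A\to B,\Gamma,\Gamma'\Rightarrow\Delta,\Delta'$; $R\to$: from $A,\Gamma\Rightarrow\Delta,B$ infer $\Gamma\Rightarrow\Delta,A\to B$. *)

theory Defs
  imports Main
begin

section \<open>Formulas (atoms are natural numbers: a countably infinite set)\<close>

datatype form = Atom nat | Bot | And form form | Or form form | Imp form form

type_synonym aseq = "nat set \<times> nat set"
type_synonym arule = "aseq list \<times> aseq"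

definition fin_aseq :: "aseq \<Rightarrow> bool" where
  "fin_aseq s \<longleftrightarrow> finite (fst s) \<and> finite (snd s)"

definition atomic_rule :: "arule \<Rightarrow> bool" where
  "atomic_rule r \<longleftrightarrow> (\<forall>s\<in>set (fst r). fin_aseq s) \<and> fin_aseq (snd r)"

definition is_base :: "arule set \<Rightarrow> bool" where
  "is_base \<B> \<longleftrightarrow> (\<forall>r\<in>\<B>. atomic_rule r)"

inductive derivable :: "arule set \<Rightarrow> nat set \<Rightarrow> nat set \<Rightarrow> bool" for \<B> where
  axiom_weak: "([], (\<Gamma>, \<Delta>)) \<in> \<B> \<Longrightarrow> finite \<Theta> \<Longrightarrow> finite \<Sigma> \<Longrightarrow>
     derivable \<B> (\<Theta> \<union> \<Gamma>) (\<Delta> \<union> \<Sigma>)"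
| mix: "(prems, (\<Gamma>, \<Delta>)) \<in> \<B> \<Longrightarrow> length \<Theta>s = length prems \<Longrightarrow> length \<Sigma>s = length prems \<Longrightarrow>
     (\<forall>i<length prems. finite (\<Theta>s ! i) \<and> finite (\<Sigma>s ! i) \<and>
        derivable \<B> (\<Theta>s ! i \<union> fst (prems ! i)) (snd (prems ! i) \<union> \<Sigma>s ! i)) \<Longrightarrow>
     derivable \<B> (\<Union> (set \<Theta>s) \<union> \<Gamma>) (\<Delta> \<union> \<Union> (set \<Sigma>s))"

fun wt :: "form \<Rightarrow> nat" where
  "wt (Atom p) = 0"
| "wt Bot = 1"
| "wt (And A B) = wt A + wt B + 1"
| "wt (Or A B) = wt A + wt B + 1"
| "wt (Imp A B) = wt A + wt B + 1"

definition wset :: "form set \<Rightarrow> nat" where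
  "wset S = (\<Sum>F\<in>S. wt F)"

definition atoms_of :: "form set \<Rightarrow> nat set" where
  "atoms_of S = {p. Atom p \<in> S}"

declare form.case_cong[fundef_cong]

lemma wset_insert_le: "finite S \<Longrightarrow> wset (insert A S) \<le> wt A + wset S"
  unfolding wset_def by (simp add: sum.insert_if)

lemma wset_remove: "finite S \<Longrightarrow> F \<in> S \<Longrightarrow> wset S = wt F + wset (S - {F})"
  unfolding wset_def by (simp add: sum.remove)

lemma wset_atoms_union: "finite T \<Longrightarrow> finite S \<Longrightarrow> wset (Atom ` T \<union> S) \<le> wset S"
proof -
  assume fT: "finite T" and fS: "finite S"
  have "wset (Atom ` T \<union> S) \<le> wset (Atom ` T) + wset S"
    unfolding wset_def using fT fS by (intro sum_Un_nat[THEN eq_imp_le, THEN order_trans]) auto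
  moreover have "wset (Atom ` T) = 0" unfolding wset_def by (rule sum.neutral) auto
  ultimately show ?thesis by simp
qed

lemma some_mem: "\<not> S \<subseteq> range Atom \<Longrightarrow> (SOME F. F \<in> S \<and> F \<notin> range Atom) \<in> S"
  by (metis (mono_tags, lifting) someI_ex subsetI)

lemma wset_mono: "finite Y \<Longrightarrow> X \<subseteq> Y \<Longrightarrow> wset X \<le> wset Y"
  unfolding wset_def by (rule sum_mono2) auto

lemma wset_un: "finite X \<Longrightarrow> finite Y \<Longrightarrow> wset (X \<union> Y) \<le> wset X + wset Y"
  unfolding wset_def by (simp add: sum_Un_nat)

lemma wset_key:
  assumes "finite S" "F \<in> S" "finite T" "finite X" "wset X < wt F"
  shows "wset (Atom ` T \<union> (X \<union> (S - {F}))) < wset S"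
proof -
  have "wset (Atom ` T \<union> (X \<union> (S - {F}))) \<le> wset (X \<union> (S - {F}))"
    using assms by (intro wset_atoms_union) auto
  also have "\<dots> \<le> wset X + wset (S - {F})" using assms by (intro wset_un) auto
  also have "\<dots> < wt F + wset (S - {F})" using assms by simp
  also have "\<dots> = wset S" using assms by (simp add: wset_remove)
  finally show ?thesis .
qed

lemma wset_two: "wset {a, b} \<le> wt a + wt b"
  unfolding wset_def by (cases "a = b") auto

text \<open>The
clauses of the paper are applied to a canonically chosen non-atomic member of
the context; the contexts in the premises of the clauses are the context with
that formula removed.  Infinite contexts are never supported (they do not
arise).  The sets of atoms \<open>\<Theta>\<close> in (Inf) are finite, represented as the
elements of a list.\<close>

function supp :: "arule set \<Rightarrow> form set \<Rightarrow> bool" where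
  "supp \<B> S =
    (if \<not> finite S then False
     else if S \<subseteq> range Atom then derivable \<B> {} (atoms_of S)
     else (let F = (SOME F. F \<in> S \<and> F \<notin> range Atom); R = S - {F} in
       (case F of
          Atom p \<Rightarrow> False
        | Bot \<Rightarrow> supp \<B> R
        | And A B \<Rightarrow> supp \<B> (insert A R) \<and> supp \<B> (insert B R)
        | Or A B \<Rightarrow> supp \<B> (insert A (insert B R))
        | Imp A B \<Rightarrow> (\<forall>\<C> (\<Theta>::nat list). is_base \<C> \<and> \<B> \<subseteq> \<C> \<longrightarrow>
              supp \<C> (Atom ` set \<Theta> \<union> {A}) \<longrightarrow> supp \<C> (Atom ` set \<Theta> \<union> insert B R)))))"
  by pat_completeness auto
termination
  apply (relation "measure (\<lambda>(\<B>, S). wset S)")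
  apply simp_all
  subgoal for S
    using some_mem[of S] by (simp add: wset_remove)
  subgoal for S x xa A B
  proof -
    assume h: "finite S" "\<not> S \<subseteq> range Atom" "And A B = (SOME F. F \<in> S \<and> F \<notin> range Atom)"
    then have "(SOME F. F \<in> S \<and> F \<notin> range Atom) \<in> S" using some_mem[of S] by simp
    moreover have "wset {A} < wt (SOME F. F \<in> S \<and> F \<notin> range Atom)" using h by (simp add: wset_def flip: h(3))
    ultimately show ?thesis using h wset_key[of S "(SOME F. F \<in> S \<and> F \<notin> range Atom)" "{}" "{A}"] by simp
  qed
  subgoal for S x xa A B
  proof -
    assume h: "finite S" "\<not> S \<subseteq> range Atom" "And A B = (SOME F. F \<in> S \<and> F \<notin> range Atom)"
    then have "(SOME F. F \<in> S \<and> F \<notin> range Atom) \<in> S" using some_mem[of S] by simp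
    moreover have "wset {B} < wt (SOME F. F \<in> S \<and> F \<notin> range Atom)" using h by (simp add: wset_def flip: h(3))
    ultimately show ?thesis using h wset_key[of S "(SOME F. F \<in> S \<and> F \<notin> range Atom)" "{}" "{B}"] by simp
  qed
  subgoal for S x xa A B
  proof -
    assume h: "finite S" "\<not> S \<subseteq> range Atom" "Or A B = (SOME F. F \<in> S \<and> F \<notin> range Atom)"
    then have "(SOME F. F \<in> S \<and> F \<notin> range Atom) \<in> S" using some_mem[of S] by simp
    moreover have "wset {A, B} < wt (SOME F. F \<in> S \<and> F \<notin> range Atom)" using wset_two[of A B] by (simp flip: h(3))
    ultimately show ?thesis using h wset_key[of S "(SOME F. F \<in> S \<and> F \<notin> range Atom)" "{}" "{A, B}"] by simp
  qed
  subgoal for B0 S x xa A B C Th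
  proof -
    assume h: "finite S" "\<not> S \<subseteq> range Atom" "Imp A B = (SOME F. F \<in> S \<and> F \<notin> range Atom)"
    then have m: "(SOME F. F \<in> S \<and> F \<notin> range Atom) \<in> S" using some_mem[of S] by simp
    have "wset (Atom ` set Th \<union> {A}) \<le> wset {A}" by (rule wset_atoms_union) auto
    moreover have "wset {A} < wt (SOME F. F \<in> S \<and> F \<notin> range Atom)" by (simp add: wset_def flip: h(3))
    moreover have "wt (SOME F. F \<in> S \<and> F \<notin> range Atom) \<le> wset S" using h m by (simp add: wset_remove)
    ultimately show ?thesis by simp
  qed
  subgoal for B0 S x xa A B C Th
  proof -
    assume h: "finite S" "\<not> S \<subseteq> range Atom" "Imp A B = (SOME F. F \<in> S \<and> F \<notin> range Atom)"
    then have "(SOME F. F \<in> S \<and> F \<notin> range Atom) \<in> S" using some_mem[of S] by simp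
    moreover have "wset {B} < wt (SOME F. F \<in> S \<and> F \<notin> range Atom)" by (simp add: wset_def flip: h(3))
    ultimately show ?thesis using h wset_key[of S "(SOME F. F \<in> S \<and> F \<notin> range Atom)" "set Th" "{B}"] by simp
  qed
  done



text \<open>Inference \<open>\<Gamma> \<Vdash>\<^sub>\<B> \<Delta>\<close>; the formulas \<open>A\<^sup>i\<close> of \<open>\<Gamma>\<close> are indexed by
themselves, so \<open>\<Theta>\<close> assigns a finite set of atoms (a list) to each member.\<close>

definition inf :: "arule set \<Rightarrow> form set \<Rightarrow> form set \<Rightarrow> bool" where
  "inf \<B> \<Gamma> \<Delta> =
    (if \<Gamma> = {} then supp \<B> \<Delta>
     else (\<forall>\<C> (\<Theta>::form \<Rightarrow> nat list). is_base \<C> \<and> \<B> \<subseteq> \<C> \<longrightarrow>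
             (\<forall>A\<in>\<Gamma>. supp \<C> (Atom ` set (\<Theta> A) \<union> {A})) \<longrightarrow>
             supp \<C> (Atom ` (\<Union>A\<in>\<Gamma>. set (\<Theta> A)) \<union> \<Delta>)))"

definition Ainit :: "arule set" where
  "Ainit = {([], (insert p \<Gamma>, insert p \<Delta>)) | p \<Gamma> \<Delta>. finite \<Gamma> \<and> finite \<Delta>}"

definition Acut :: "arule set" where
  "Acut = {([(\<Gamma>1, insert p \<Delta>1), (insert p \<Gamma>2, \<Delta>2)], (\<Gamma>1 \<union> \<Gamma>2, \<Delta>1 \<union> \<Delta>2)) | p \<Gamma>1 \<Delta>1 \<Gamma>2 \<Delta>2.
            finite \<Gamma>1 \<and> finite \<Delta>1 \<and> finite \<Gamma>2 \<and> finite \<Delta>2}"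

definition ST :: "arule set" where
  "ST = Ainit \<union> Acut"

definition valid :: "form set \<Rightarrow> form set \<Rightarrow> bool" where
  "valid \<Gamma> \<Delta> \<longleftrightarrow> (\<forall>\<B>. is_base \<B> \<and> ST \<subseteq> \<B> \<longrightarrow> inf \<B> \<Gamma> \<Delta>)"

inductive CLp :: "form set \<Rightarrow> form set \<Rightarrow> bool" where
  init: "finite \<Gamma> \<Longrightarrow> finite \<Delta> \<Longrightarrow> CLp (insert A \<Gamma>) (insert A \<Delta>)"
| LBot: "finite \<Gamma> \<Longrightarrow> finite \<Delta> \<Longrightarrow> CLp (insert Bot \<Gamma>) \<Delta>"
| RBot: "CLp \<Gamma> \<Delta> \<Longrightarrow> CLp \<Gamma> (insert Bot \<Delta>)"
| LAnd: "CLp (insert A (insert B \<Gamma>)) \<Delta> \<Longrightarrow> CLp (insert (And A B) \<Gamma>) \<Delta>"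
| RAnd: "CLp \<Gamma> (insert A \<Delta>) \<Longrightarrow> CLp \<Gamma>' (insert B \<Delta>') \<Longrightarrow>
           CLp (\<Gamma> \<union> \<Gamma>') (insert (And A B) (\<Delta> \<union> \<Delta>'))"
| LOr: "CLp (insert A \<Gamma>) \<Delta> \<Longrightarrow> CLp (insert B \<Gamma>') \<Delta>' \<Longrightarrow>
           CLp (insert (Or A B) (\<Gamma> \<union> \<Gamma>')) (\<Delta> \<union> \<Delta>')"
| ROr: "CLp \<Gamma> (insert A (insert B \<Delta>)) \<Longrightarrow> CLp \<Gamma> (insert (Or A B) \<Delta>)"
| LImp: "CLp \<Gamma> (insert A \<Delta>) \<Longrightarrow> CLp (insert B \<Gamma>') \<Delta>' \<Longrightarrow>
           CLp (insert (Imp A B) (\<Gamma> \<union> \<Gamma>')) (\<Delta> \<union> \<Delta>')"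
| RImp: "CLp (insert A \<Gamma>) (insert B \<Delta>) \<Longrightarrow> CLp \<Gamma> (insert (Imp A B) \<Delta>)"

end

theory Submission imports Defs "HOL-Library.Multiset" begin

declare supp.simps[simp del]

lemma supp_inf: "infinite S \<Longrightarrow> \<not> supp X S"
  by (subst supp.simps) simp

lemma supp_atoms: "finite S \<Longrightarrow> S \<subseteq> range Atom \<Longrightarrow> supp X S = derivable X {} (atoms_of S)"
  by (subst supp.simps) simp


lemma derivable_mono: "derivable B G D \<Longrightarrow> B \<subseteq> C \<Longrightarrow> derivable C G D"
proof (induction rule: derivable.induct)
  case (axiom_weak \<Gamma> \<Delta> \<Theta> \<Sigma>)
  then show ?case by (auto intro: derivable.axiom_weak)
next
  case (mix prems \<Gamma> \<Delta> \<Theta>s \<Sigma>s)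
  then show ?case by (intro derivable.mix) auto
qed

lemma Un_upd0: "xs \<noteq> [] \<Longrightarrow> \<Union> (set (xs[0 := xs ! 0 \<union> Q])) = \<Union> (set xs) \<union> Q"
  by (cases xs) auto

lemma derivable_weakR: "derivable B G D \<Longrightarrow> finite Q \<Longrightarrow> derivable B G (D \<union> Q)"
proof (induction rule: derivable.induct)
  case (axiom_weak \<Gamma> \<Delta> \<Theta> \<Sigma>)
  then show ?case using derivable.axiom_weak[of \<Gamma> \<Delta> B \<Theta> "\<Sigma> \<union> Q"] by (simp add: Un_assoc)
next
  case (mix prems \<Gamma> \<Delta> \<Theta>s \<Sigma>s)
  show ?case
  proof (cases "prems = []")
    case True
    then have "\<Theta>s = []" "\<Sigma>s = []" using mix by auto
    then show ?thesis using derivable.axiom_weak[of \<Gamma> \<Delta> B "{}" Q] mix True by simp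
  next
    case False
    define \<Sigma>s' where "\<Sigma>s' = \<Sigma>s[0 := \<Sigma>s ! 0 \<union> Q]"
    have ne: "\<Sigma>s \<noteq> []" using False mix by auto
    have "derivable B (\<Union> (set \<Theta>s) \<union> \<Gamma>) (\<Delta> \<union> \<Union> (set \<Sigma>s'))"
    proof (rule derivable.mix[OF mix(1) mix(2)])
      show "length \<Sigma>s' = length prems" using mix by (simp add: \<Sigma>s'_def)
      show "\<forall>i<length prems. finite (\<Theta>s ! i) \<and> finite (\<Sigma>s' ! i) \<and>
        derivable B (\<Theta>s ! i \<union> fst (prems ! i)) (snd (prems ! i) \<union> \<Sigma>s' ! i)"
      proof (intro allI impI)
        fix i assume i: "i < length prems"
        show "finite (\<Theta>s ! i) \<and> finite (\<Sigma>s' ! i) \<and>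
          derivable B (\<Theta>s ! i \<union> fst (prems ! i)) (snd (prems ! i) \<union> \<Sigma>s' ! i)"
        proof (cases "i = 0")
          case True
          then show ?thesis using mix.IH[rule_format, OF i] mix.prems mix(3) i
            by (auto simp: \<Sigma>s'_def Un_assoc)
        next
          case False
          then show ?thesis using mix.IH[rule_format, OF i] mix(3) i by (auto simp: \<Sigma>s'_def)
        qed
      qed
    qed
    then show ?thesis using Un_upd0[OF ne, of Q] by (simp add: \<Sigma>s'_def Un_assoc)
  qed
qed

lemma supp_unfold: assumes "finite S" "\<not> S \<subseteq> range Atom" "F = (SOME F. F \<in> S \<and> F \<notin> range Atom)"
  shows "supp X S = (case F of Atom p \<Rightarrow> False | Bot \<Rightarrow> supp X (S - {F})
        | And A B \<Rightarrow> supp X (insert A (S - {F})) \<and> supp X (insert B (S - {F}))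
        | Or A B \<Rightarrow> supp X (insert A (insert B (S - {F})))
        | Imp A B \<Rightarrow> (\<forall>\<C> (\<Theta>::nat list). is_base \<C> \<and> X \<subseteq> \<C> \<longrightarrow>
              supp \<C> (Atom ` set \<Theta> \<union> {A}) \<longrightarrow> supp \<C> (Atom ` set \<Theta> \<union> insert B (S - {F}))))"
  using assms(1,2) by (subst supp.simps) (simp add: Let_def flip: assms(3))

lemma supp_mono: "supp B S \<Longrightarrow> B \<subseteq> C \<Longrightarrow> supp C S"
proof (induction B S arbitrary: C rule: supp.induct)
  case (1 B S)
  show ?case
  proof (cases "finite S \<and> \<not> S \<subseteq> range Atom")
    case False
    then show ?thesis using 1(7,8) supp_inf[of S] supp_atoms[of S] by (metis derivable_mono)
  next
    case True
    define F where "F = (SOME F. F \<in> S \<and> F \<notin> range Atom)"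
    note u = supp_unfold[OF conjunct1[OF True] conjunct2[OF True] F_def]
    have fin: "\<not> infinite S" "\<not> S \<subseteq> range Atom" using True by auto
    note IH = 1(1-6)[OF fin F_def refl]
    show ?thesis
    proof (cases F)
      case (Atom p) then show ?thesis using 1(7) unfolding u by simp
    next
      case Bot then show ?thesis using 1(7,8) IH(1) unfolding u by simp
    next
      case (And A1 A2) then show ?thesis using 1(7,8) IH(2,3) unfolding u by simp
    next
      case (Or A1 A2) then show ?thesis using 1(7,8) IH(4) unfolding u by simp
    next
      case (Imp A1 A2) then show ?thesis using 1(7,8) unfolding u by auto
    qed
  qed
qed

definition lw :: "form list \<Rightarrow> nat" where
  "lw xs = sum_list (map (\<lambda>F. 2 * wt F + 1) xs)"

lemma lw_simps[simp]: "lw [] = 0" "lw (F # xs) = 2 * wt F + 1 + lw xs" "lw (xs @ ys) = lw xs + lw ys"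
  by (auto simp: lw_def)

lemma lw_mset: "mset xs = mset ys \<Longrightarrow> lw xs = lw ys"
  unfolding lw_def by (metis mset_map sum_mset_sum_list)

function suppL :: "arule set \<Rightarrow> form list \<Rightarrow> nat set \<Rightarrow> bool" where
  "suppL B [] P = derivable B {} P"
| "suppL B (Atom p # xs) P = suppL B xs (insert p P)"
| "suppL B (Bot # xs) P = suppL B xs P"
| "suppL B (And A C # xs) P = (suppL B (A # xs) P \<and> suppL B (C # xs) P)"
| "suppL B (Or A C # xs) P = suppL B (A # C # xs) P"
| "suppL B (Imp A C # xs) P = (\<forall>C' (\<Theta>::nat list). is_base C' \<and> B \<subseteq> C' \<longrightarrow>
      supp C' (Atom ` set \<Theta> \<union> {A}) \<longrightarrow> suppL C' (C # xs) (P \<union> set \<Theta>))"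
  by pat_completeness auto
termination by (relation "measure (\<lambda>(B, xs, P). lw xs)") auto

fun step :: "form \<Rightarrow> (arule set \<Rightarrow> form list \<Rightarrow> nat set \<Rightarrow> bool) \<Rightarrow> arule set \<Rightarrow> nat set \<Rightarrow> bool" where
  "step (Atom p) K B P = K B [] (insert p P)"
| "step Bot K B P = K B [] P"
| "step (And A C) K B P = (K B [A] P \<and> K B [C] P)"
| "step (Or A C) K B P = K B [A, C] P"
| "step (Imp A C) K B P = (\<forall>C' (\<Theta>::nat list). is_base C' \<and> B \<subseteq> C' \<longrightarrow>
      supp C' (Atom ` set \<Theta> \<union> {A}) \<longrightarrow> K C' [C] (P \<union> set \<Theta>))"

fun kids :: "form \<Rightarrow> form list set" where
  "kids (Atom p) = {[]}"
| "kids Bot = {[]}"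
| "kids (And A C) = {[A], [C]}"
| "kids (Or A C) = {[A, C]}"
| "kids (Imp A C) = {[C]}"

lemma suppL_Cons: "suppL B (F # xs) P = step F (\<lambda>B L P. suppL B (L @ xs) P) B P"
  by (cases F) auto

lemma step_cong: "(\<And>B' P' L. L \<in> kids F \<Longrightarrow> K1 B' L P' = K2 B' L P') \<Longrightarrow> step F K1 B P = step F K2 B P"
  by (cases F) auto

lemma kids_lw: "L \<in> kids F \<Longrightarrow> lw L < 2 * wt F + 1"
  by (cases F) auto

lemma step_comm: "step G (\<lambda>B L P. step F (\<lambda>B' M P'. K B' M L P') B P) B P =
   step F (\<lambda>B M P. step G (\<lambda>B' L P'. K B' M L P') B P) B P"
proof (cases G)
  case (Imp A C)
  note G = this
  show ?thesis
  proof (cases F)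
    case (Imp D E)
    show ?thesis unfolding G Imp step.simps
    proof (intro iffI allI impI)
      fix C2 C1 :: "arule set" and \<Theta>2 \<Theta>1 :: "nat list"
      assume h: "\<forall>C' \<Theta>. is_base C' \<and> B \<subseteq> C' \<longrightarrow> supp C' (Atom ` set \<Theta> \<union> {A}) \<longrightarrow>
             (\<forall>C'a \<Theta>'. is_base C'a \<and> C' \<subseteq> C'a \<longrightarrow> supp C'a (Atom ` set \<Theta>' \<union> {D}) \<longrightarrow>
                K C'a [E] [C] (P \<union> set \<Theta> \<union> set \<Theta>'))"
        and a: "is_base C2 \<and> B \<subseteq> C2" "supp C2 (Atom ` set \<Theta>2 \<union> {D})"
          "is_base C1 \<and> C2 \<subseteq> C1" "supp C1 (Atom ` set \<Theta>1 \<union> {A})"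
      have "supp C1 (Atom ` set \<Theta>2 \<union> {D})" using a supp_mono by blast
      then have "K C1 [E] [C] (P \<union> set \<Theta>1 \<union> set \<Theta>2)" using h a by blast
      then show "K C1 [E] [C] (P \<union> set \<Theta>2 \<union> set \<Theta>1)" by (simp add: Un_ac)
    next
      fix C2 C1 :: "arule set" and \<Theta>2 \<Theta>1 :: "nat list"
      assume h: "\<forall>C' \<Theta>. is_base C' \<and> B \<subseteq> C' \<longrightarrow> supp C' (Atom ` set \<Theta> \<union> {D}) \<longrightarrow>
             (\<forall>C'a \<Theta>'. is_base C'a \<and> C' \<subseteq> C'a \<longrightarrow> supp C'a (Atom ` set \<Theta>' \<union> {A}) \<longrightarrow>
                K C'a [E] [C] (P \<union> set \<Theta> \<union> set \<Theta>'))"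
        and a: "is_base C2 \<and> B \<subseteq> C2" "supp C2 (Atom ` set \<Theta>2 \<union> {A})"
          "is_base C1 \<and> C2 \<subseteq> C1" "supp C1 (Atom ` set \<Theta>1 \<union> {D})"
      have "supp C1 (Atom ` set \<Theta>2 \<union> {A})" using a supp_mono by blast
      then have "K C1 [E] [C] (P \<union> set \<Theta>1 \<union> set \<Theta>2)" using h a by blast
      then show "K C1 [E] [C] (P \<union> set \<Theta>2 \<union> set \<Theta>1)" by (simp add: Un_ac)
    qed
  qed (auto simp: G Un_ac insert_commute)
qed (cases F; auto simp: Un_ac insert_commute)+

lemma suppL_perm: "mset xs = mset ys \<Longrightarrow> suppL B xs P = suppL B ys P"
proof (induction "lw xs" arbitrary: xs ys B P rule: less_induct)
  case less
  show ?case
  proof (cases xs)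
    case Nil then show ?thesis using less.prems by simp
  next
    case (Cons G zs)
    then obtain F ws where ys: "ys = F # ws" using less.prems by (cases ys) auto
    show ?thesis
    proof (cases "G = F")
      case True
      then have m: "mset zs = mset ws" using less.prems Cons ys by simp
      show ?thesis unfolding Cons ys True suppL_Cons
        apply (rule step_cong)
        apply (rule less.hyps)
        using kids_lw m Cons True by fastforce+
    next
      case False
      have Fz: "F \<in> set zs" using less.prems Cons ys False
        by (metis insert_iff list.set_intros(1) mset_eq_setD set_ConsD)
      define r where "r = remove1 F zs"
      have zr: "mset zs = mset (F # r)" using Fz by (simp add: r_def)
      have wr: "mset ws = mset (G # r)" using less.prems Cons ys zr by (simp add: add_mset_commute)
      have lz: "lw zs = lw (F # r)" using zr by (rule lw_mset)
      have lwr: "lw ws = lw (G # r)" using wr by (rule lw_mset)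
      have lx: "lw xs = lw (G # F # r)" using Cons lz by simp
      have e1: "suppL B xs P = step G (\<lambda>B L P. step F (\<lambda>B' M P'. suppL B' (M @ L @ r) P') B P) B P"
        unfolding Cons suppL_Cons
      proof (rule step_cong)
        fix B' P' L assume L: "L \<in> kids G"
        have "suppL B' (L @ zs) P' = suppL B' (F # L @ r) P'"
          apply (rule less.hyps) using kids_lw[OF L] Cons lz zr by simp_all
        then show "suppL B' (L @ zs) P' = step F (\<lambda>B' M P'. suppL B' (M @ L @ r) P') B' P'"
          by (simp add: suppL_Cons)
      qed
      have e2: "suppL B ys P = step F (\<lambda>B M P. step G (\<lambda>B' L P'. suppL B' (L @ M @ r) P') B P) B P"
        unfolding ys suppL_Cons
      proof (rule step_cong)
        fix B' P' M assume M: "M \<in> kids F"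
        have "suppL B' (M @ ws) P' = suppL B' (G # M @ r) P'"
          apply (rule less.hyps) using kids_lw[OF M] lwr lx wr by simp_all
        then show "suppL B' (M @ ws) P' = step G (\<lambda>B' L P'. suppL B' (L @ M @ r) P') B' P'"
          by (simp add: suppL_Cons)
      qed
      have e3: "step F (\<lambda>B M P. step G (\<lambda>B' L P'. suppL B' (L @ M @ r) P') B P) B P =
          step F (\<lambda>B M P. step G (\<lambda>B' L P'. suppL B' (M @ L @ r) P') B P) B P"
      proof (rule step_cong, rule step_cong)
        fix B1 P1 M B2 P2 L assume M: "M \<in> kids F" and L: "L \<in> kids G"
        show "suppL B2 (L @ M @ r) P2 = suppL B2 (M @ L @ r) P2"
          apply (rule less.hyps) using kids_lw[OF M] kids_lw[OF L] lx by (simp_all add: ac_simps)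
      qed
      show ?thesis unfolding e1 e2 e3 by (rule step_comm)
    qed
  qed
qed

lemma suppL_deriv: "derivable B {} P \<Longrightarrow> suppL B ys P"
proof (induction B ys P rule: suppL.induct)
  case (2 B p xs P)
  then show ?case using derivable_weakR[of B "{}" P "{p}"] by simp
next
  case (6 B A C xs P)
  then show ?case using derivable_weakR derivable_mono by auto
qed auto

lemma suppL_weak_app: "suppL B xs P \<Longrightarrow> suppL B (xs @ ys) P"
  by (induction B xs P rule: suppL.induct) (auto intro: suppL_deriv)

lemma suppL_weak: "suppL B xs P \<Longrightarrow> mset xs \<subseteq># mset ys \<Longrightarrow> suppL B ys P"
proof -
  assume a: "suppL B xs P" "mset xs \<subseteq># mset ys"
  obtain zs where "mset ys = mset xs + mset zs"
    using a(2) by (metis ex_mset subset_mset.add_diff_inverse)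
  then have "mset ys = mset (xs @ zs)" by simp
  then show ?thesis using suppL_perm suppL_weak_app a(1) by metis
qed

lemma suppL_contr: "suppL B (A # A # xs) P \<Longrightarrow> suppL B (A # xs) P"
proof (induction A arbitrary: B xs P)
  case (Atom x)
  then show ?case by simp
next
  case Bot
  then show ?case by simp
next
  case (And A1 A2)
  have "suppL B (A1 # And A1 A2 # xs) P" using And.prems by simp
  then have "suppL B (And A1 A2 # A1 # xs) P" using suppL_perm[of "A1 # And A1 A2 # xs" "And A1 A2 # A1 # xs"]
    by (simp add: add_mset_commute)
  then have 1: "suppL B (A1 # xs) P" using And.IH(1) by simp
  have "suppL B (A2 # And A1 A2 # xs) P" using And.prems by simp
  then have "suppL B (And A1 A2 # A2 # xs) P" using suppL_perm[of "A2 # And A1 A2 # xs" "And A1 A2 # A2 # xs"]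
    by (simp add: add_mset_commute)
  then have 2: "suppL B (A2 # xs) P" using And.IH(2) by simp
  show ?case using 1 2 by simp
next
  case (Or A1 A2)
  have "suppL B (A1 # A2 # Or A1 A2 # xs) P" using Or.prems by simp
  then have "suppL B (Or A1 A2 # A1 # A2 # xs) P"
    using suppL_perm[of "A1 # A2 # Or A1 A2 # xs" "Or A1 A2 # A1 # A2 # xs"]
    by (simp add: add_mset_commute)
  then have "suppL B (A1 # A2 # A1 # A2 # xs) P" by simp
  then have "suppL B (A1 # A1 # A2 # A2 # xs) P"
    using suppL_perm[of "A1 # A2 # A1 # A2 # xs" "A1 # A1 # A2 # A2 # xs"]
    by (simp add: add_mset_commute)
  then have "suppL B (A1 # A2 # A2 # xs) P" using Or.IH(1) by blast
  then have "suppL B (A2 # A2 # A1 # xs) P"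
    using suppL_perm[of "A1 # A2 # A2 # xs" "A2 # A2 # A1 # xs"]
    by (simp add: add_mset_commute)
  then have "suppL B (A2 # A1 # xs) P" using Or.IH(2) by blast
  then show ?case
    using suppL_perm[of "A2 # A1 # xs" "A1 # A2 # xs"] by (simp add: add_mset_commute)
next
  case (Imp A C)
  show ?case unfolding suppL.simps
  proof (intro allI impI)
    fix C1 :: "arule set" and \<Theta>1 :: "nat list"
    assume c: "is_base C1 \<and> B \<subseteq> C1" and h: "supp C1 (Atom ` set \<Theta>1 \<union> {A})"
    have "suppL C1 (C # Imp A C # xs) (P \<union> set \<Theta>1)" using Imp.prems c h by simp
    then have "suppL C1 (Imp A C # C # xs) (P \<union> set \<Theta>1)"
      using suppL_perm[of "C # Imp A C # xs" "Imp A C # C # xs"] by (simp add: add_mset_commute)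
    then have "\<forall>C' \<Theta>. is_base C' \<and> C1 \<subseteq> C' \<longrightarrow> supp C' (Atom ` set \<Theta> \<union> {A}) \<longrightarrow>
       suppL C' (C # C # xs) (P \<union> set \<Theta>1 \<union> set \<Theta>)" by simp
    then have "suppL C1 (C # C # xs) (P \<union> set \<Theta>1 \<union> set \<Theta>1)" using c h by blast
    then show "suppL C1 (C # xs) (P \<union> set \<Theta>1)" using Imp.IH(2) by (simp add: Un_assoc)
  qed
qed

lemma suppL_distinct: "suppL B xs P \<Longrightarrow> distinct ys \<Longrightarrow> set ys = set xs \<Longrightarrow> suppL B ys P"
proof (induction "length xs" arbitrary: xs rule: less_induct)
  case less
  show ?case
  proof (cases "distinct xs")
    case True
    then have "mset xs = mset ys" using less.prems by (simp add: set_eq_iff_mset_eq_distinct)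
    then show ?thesis using suppL_perm less.prems by metis
  next
    case False
    then obtain as x bs cs where xs: "xs = as @ [x] @ bs @ [x] @ cs" by (metis not_distinct_decomp)
    define r where "r = as @ bs @ cs"
    have "mset xs = mset (x # x # r)" unfolding xs r_def by simp
    then have "suppL B (x # x # r) P" using suppL_perm less.prems(1) by metis
    then have "suppL B (x # r) P" by (rule suppL_contr)
    moreover have "length (x # r) < length xs" unfolding xs r_def by simp
    moreover have "set (x # r) = set xs" unfolding xs r_def by auto
    ultimately show ?thesis using less.hyps less.prems by metis
  qed
qed

lemma suppL_set: "set xs = set ys \<Longrightarrow> suppL B xs P = suppL B ys P"
proof -
  have *: "suppL B xs P \<Longrightarrow> set xs = set ys \<Longrightarrow> suppL B ys P" for xs ys
  proof -
    assume a: "suppL B xs P" "set xs = set ys"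
    then have "suppL B (remdups ys) P" using suppL_distinct by simp
    moreover have "mset (remdups ys) \<subseteq># mset ys" by (simp add: mset_remdups_subset_eq)
    ultimately show ?thesis using suppL_weak by blast
  qed
  assume "set xs = set ys" then show ?thesis using * by metis
qed


lemma suppL_atoms: "suppL B (map Atom ps @ xs) P = suppL B xs (P \<union> set ps)"
  by (induction ps arbitrary: P) auto

fun unA :: "form \<Rightarrow> nat" where
  "unA (Atom p) = p"
| "unA _ = 0"

lemma supp_eq: "set xs = S \<Longrightarrow> supp B S = suppL B xs {}"
proof (induction B S arbitrary: xs rule: supp.induct)
  case (1 B S)
  have fin: "finite S" using 1(7) by auto
  show ?case
  proof (cases "S \<subseteq> range Atom")
    case True
    have xs: "map Atom (map unA xs) = xs" unfolding map_map using True 1(7) by (intro map_idI) auto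
    have at: "atoms_of S = set (map unA xs)" using xs 1(7) unfolding atoms_of_def
      by (metis (no_types, lifting) Collect_cong image_eqI image_iff inj_onI
          inj_on_image_mem_iff set_map form.inject(1) mem_Collect_eq set_eq_iff top_greatest)
    have "suppL B xs {} = suppL B (map Atom (map unA xs) @ []) {}" using xs by simp
    also have "\<dots> = derivable B {} (set (map unA xs))" unfolding suppL_atoms by simp
    finally show ?thesis using supp_atoms[OF fin True] at by simp
  next
    case False
    define F where "F = (SOME F. F \<in> S \<and> F \<notin> range Atom)"
    have FS: "F \<in> S \<and> F \<notin> range Atom" unfolding F_def using False
      by (metis (mono_tags, lifting) someI_ex subsetI)
    obtain r where r: "set r = S - {F}" using fin by (meson finite_Diff finite_list)
    have e: "suppL B xs {} = suppL B (F # r) {}" by (rule suppL_set) (use 1(7) FS r in auto)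
    have fin': "\<not> infinite S" using fin by simp
    note IH = 1(1-6)[OF fin' False F_def refl]
    note u = supp_unfold[OF fin False F_def]
    show ?thesis
    proof (cases F)
      case (Atom p) then show ?thesis using FS by auto
    next
      case Bot then show ?thesis unfolding u e using IH(1)[OF Bot r] by simp
    next
      case (And A1 A2) then show ?thesis unfolding u e
        using IH(2)[OF And, of "A1 # r"] IH(3)[OF And, of "A2 # r"] r by simp
    next
      case (Or A1 A2) then show ?thesis unfolding u e
        using IH(4)[OF Or, of "A1 # A2 # r"] r by simp
    next
      case (Imp A1 A2)
      have "supp C (Atom ` set \<Theta> \<union> insert A2 (S - {F})) = suppL C (A2 # r) (set \<Theta>)"
        if "is_base C \<and> B \<subseteq> C" "supp C (Atom ` set \<Theta> \<union> {A1})" for C \<Theta>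
        using IH(6)[OF Imp that, of "map Atom \<Theta> @ A2 # r"] r suppL_atoms[of C \<Theta> "A2 # r" "{}"] by simp
      then show ?thesis unfolding u e using Imp by auto
    qed
  qed
qed

lemma supp_fin: "supp B S \<Longrightarrow> finite S"
  using supp_inf by blast

lemma supp_weak: "supp B S \<Longrightarrow> S \<subseteq> T \<Longrightarrow> finite T \<Longrightarrow> supp B T"
proof -
  assume a: "supp B S" "S \<subseteq> T" "finite T"
  obtain xs where xs: "set xs = S" using supp_fin[OF a(1)] finite_list by blast
  obtain ys where ys: "set ys = T" using a(3) finite_list by blast
  have "suppL B xs {}" using a(1) supp_eq[OF xs] by simp
  then have "suppL B (xs @ ys) {}" by (rule suppL_weak_app)
  then have "suppL B ys {}" using suppL_set[of "xs @ ys" ys] xs ys a(2) by auto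
  then show ?thesis using supp_eq[OF ys] by simp
qed

lemma supp_Bot: "finite S \<Longrightarrow> supp B (insert Bot S) = supp B S"
proof -
  assume "finite S" then obtain xs where xs: "set xs = S" using finite_list by blast
  show ?thesis using supp_eq[OF xs] supp_eq[of "Bot # xs"] xs by simp
qed

lemma supp_And: "finite S \<Longrightarrow> supp B (insert (And A C) S) = (supp B (insert A S) \<and> supp B (insert C S))"
proof -
  assume "finite S" then obtain xs where xs: "set xs = S" using finite_list by blast
  show ?thesis using supp_eq[of "And A C # xs"] supp_eq[of "A # xs"] supp_eq[of "C # xs"] xs by simp
qed

lemma supp_Or: "finite S \<Longrightarrow> supp B (insert (Or A C) S) = supp B (insert A (insert C S))"
proof -
  assume "finite S" then obtain xs where xs: "set xs = S" using finite_list by blast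
  show ?thesis using supp_eq[of "Or A C # xs"] supp_eq[of "A # C # xs"] xs by simp
qed

lemma supp_Imp: "finite S \<Longrightarrow> supp B (insert (Imp A C) S) = (\<forall>C' (\<Theta>::nat list). is_base C' \<and> B \<subseteq> C' \<longrightarrow>
      supp C' (Atom ` set \<Theta> \<union> {A}) \<longrightarrow> supp C' (Atom ` set \<Theta> \<union> insert C S))"
proof -
  assume "finite S" then obtain xs where xs: "set xs = S" using finite_list by blast
  have "supp C' (Atom ` set \<Theta> \<union> insert C S) = suppL C' (C # xs) (set \<Theta>)" for C' \<Theta>
    using supp_eq[of "map Atom \<Theta> @ C # xs"] suppL_atoms[of C' \<Theta> "C # xs" "{}"] xs by simp
  then show ?thesis using supp_eq[of "Imp A C # xs"] xs by simp
qed

lemma supp_atomset: "finite P \<Longrightarrow> supp B (Atom ` P) = derivable B {} P"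
proof -
  assume "finite P"
  then have "atoms_of (Atom ` P) = P" unfolding atoms_of_def by auto
  then show ?thesis using supp_atoms[of "Atom ` P" B] \<open>finite P\<close> by auto
qed

lemma cutL: "suppL C (ys @ [A]) P \<Longrightarrow> finite P \<Longrightarrow> is_base C \<Longrightarrow> finite Z \<Longrightarrow>
   (\<forall>C' (\<Theta>::nat list). is_base C' \<and> C \<subseteq> C' \<longrightarrow> supp C' (Atom ` set \<Theta> \<union> {A}) \<longrightarrow> supp C' (Atom ` set \<Theta> \<union> Z)) \<Longrightarrow>
   supp C (Atom ` P \<union> set ys \<union> Z)"
proof (induction "lw ys" arbitrary: ys C P rule: less_induct)
  case less
  show ?case
  proof (cases ys)
    case Nil
    obtain ps where ps: "set ps = P" using less.prems(2) finite_list by blast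
    have "supp C (Atom ` set ps \<union> {A})"
      using supp_eq[of "map Atom ps @ [A]"] suppL_atoms[of C ps "[A]" "{}"] less.prems(1) Nil ps by simp
    then show ?thesis using less.prems(3,5) Nil ps by auto
  next
    case (Cons G ys')
    have fW: "finite (Atom ` P \<union> set ys' \<union> Z)" using less.prems by simp
    show ?thesis
    proof (cases G)
      case (Atom p)
      have "supp C (Atom ` (insert p P) \<union> set ys' \<union> Z)"
        apply (rule less.hyps) using less.prems Cons Atom by auto
      moreover have "Atom ` (insert p P) \<union> set ys' \<union> Z = Atom ` P \<union> set ys \<union> Z" using Cons Atom by auto
      ultimately show ?thesis by simp
    next
      case Bot
      have "supp C (Atom ` P \<union> set ys' \<union> Z)"
        apply (rule less.hyps) using less.prems Cons Bot by auto
      moreover have "Atom ` P \<union> set ys \<union> Z = insert Bot (Atom ` P \<union> set ys' \<union> Z)" using Cons Bot by auto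
      ultimately show ?thesis using supp_Bot[OF fW] by simp
    next
      case (And A1 A2)
      have "supp C (Atom ` P \<union> set (A1 # ys') \<union> Z)"
        apply (rule less.hyps) using less.prems Cons And by auto
      moreover have "supp C (Atom ` P \<union> set (A2 # ys') \<union> Z)"
        apply (rule less.hyps) using less.prems Cons And by auto
      moreover have "Atom ` P \<union> set ys \<union> Z = insert (And A1 A2) (Atom ` P \<union> set ys' \<union> Z)" using Cons And by auto
      ultimately show ?thesis using supp_And[OF fW] by (simp add: insert_commute)
    next
      case (Or A1 A2)
      have "supp C (Atom ` P \<union> set (A1 # A2 # ys') \<union> Z)"
        apply (rule less.hyps) using less.prems Cons Or by auto
      moreover have "Atom ` P \<union> set ys \<union> Z = insert (Or A1 A2) (Atom ` P \<union> set ys' \<union> Z)" using Cons Or by auto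
      ultimately show ?thesis using supp_Or[OF fW] by (simp add: insert_commute)
    next
      case (Imp A1 A2)
      have eq: "Atom ` P \<union> set ys \<union> Z = insert (Imp A1 A2) (Atom ` P \<union> set ys' \<union> Z)" using Cons Imp by auto
      show ?thesis unfolding eq supp_Imp[OF fW]
      proof (intro allI impI)
        fix C' :: "arule set" and \<Theta> :: "nat list"
        assume c: "is_base C' \<and> C \<subseteq> C'" and h: "supp C' (Atom ` set \<Theta> \<union> {A1})"
        have "suppL C' ((A2 # ys') @ [A]) (P \<union> set \<Theta>)" using less.prems(1) Cons Imp c h by auto
        then have "supp C' (Atom ` (P \<union> set \<Theta>) \<union> set (A2 # ys') \<union> Z)"
          apply (rule less.hyps[rotated])
          using less.prems Cons Imp c by (auto 0 3 dest: subset_trans)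
        then show "supp C' (Atom ` set \<Theta> \<union> insert A2 (Atom ` P \<union> set ys' \<union> Z))"
          by (simp add: image_Un Un_ac)
      qed
    qed
  qed
qed

lemma cut: "finite Y \<Longrightarrow> finite Z \<Longrightarrow> finite P \<Longrightarrow> is_base C \<Longrightarrow> supp C (Atom ` P \<union> insert A Y) \<Longrightarrow>
   (\<forall>C' (\<Theta>::nat list). is_base C' \<and> C \<subseteq> C' \<longrightarrow> supp C' (Atom ` set \<Theta> \<union> {A}) \<longrightarrow> supp C' (Atom ` set \<Theta> \<union> Z)) \<Longrightarrow>
   supp C (Atom ` P \<union> Y \<union> Z)"
proof -
  assume a: "finite Y" "finite Z" "finite P" "is_base C" "supp C (Atom ` P \<union> insert A Y)"
    "\<forall>C' (\<Theta>::nat list). is_base C' \<and> C \<subseteq> C' \<longrightarrow> supp C' (Atom ` set \<Theta> \<union> {A}) \<longrightarrow> supp C' (Atom ` set \<Theta> \<union> Z)"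
  obtain ys where ys: "set ys = Y" using a(1) finite_list by blast
  obtain ps where ps: "set ps = P" using a(3) finite_list by blast
  have "suppL C (map Atom ps @ ys @ [A]) {}" using supp_eq[of "map Atom ps @ ys @ [A]"] a(5) ys ps by auto
  then have "suppL C (ys @ [A]) P" using suppL_atoms ps by simp
  from cutL[OF this a(3,4,2,6)] show ?thesis using ys by simp
qed


definition V :: "form set \<Rightarrow> form set \<Rightarrow> bool" where
  "V \<Gamma> \<Delta> \<longleftrightarrow> (\<forall>C (\<Theta>::form \<Rightarrow> nat list). is_base C \<longrightarrow>
     (\<forall>A\<in>\<Gamma>. supp C (Atom ` set (\<Theta> A) \<union> {A})) \<longrightarrow>
     supp C (Atom ` (\<Union>A\<in>\<Gamma>. set (\<Theta> A)) \<union> \<Delta>))"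

lemma CLp_fin: "CLp \<Gamma> \<Delta> \<Longrightarrow> finite \<Gamma> \<and> finite \<Delta>"
  by (induction rule: CLp.induct) auto

lemma V_hyp:
  assumes V: "V (insert A \<Gamma>) \<Delta>" and f: "finite \<Gamma>" "finite \<Delta>"
    and h: "\<forall>X\<in>\<Gamma>. supp C (Atom ` set (\<Theta> X) \<union> {X})"
    and c: "is_base C' \<and> C \<subseteq> C'" and a: "supp C' (Atom ` set \<Theta>1 \<union> {A})"
  shows "supp C' (Atom ` set \<Theta>1 \<union> (Atom ` (\<Union>X\<in>\<Gamma>. set (\<Theta> X)) \<union> \<Delta>))"
proof -
  define \<Theta>' where "\<Theta>' X = (if X = A then \<Theta>1 else []) @ (if X \<in> \<Gamma> then \<Theta> X else [])" for X
  have "\<forall>X\<in>insert A \<Gamma>. supp C' (Atom ` set (\<Theta>' X) \<union> {X})"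
  proof
    fix X assume X: "X \<in> insert A \<Gamma>"
    show "supp C' (Atom ` set (\<Theta>' X) \<union> {X})"
    proof (cases "X = A")
      case True
      show ?thesis by (rule supp_weak[OF a]) (auto simp: \<Theta>'_def True)
    next
      case False
      then have "X \<in> \<Gamma>" using X by simp
      then show ?thesis using h supp_mono c False by (auto simp: \<Theta>'_def)
    qed
  qed
  then have "supp C' (Atom ` (\<Union>X\<in>insert A \<Gamma>. set (\<Theta>' X)) \<union> \<Delta>)"
    using V c unfolding V_def by blast
  then show ?thesis by (rule supp_weak) (use f in \<open>auto simp: \<Theta>'_def split: if_splits\<close>)
qed

lemma sound: "CLp \<Gamma> \<Delta> \<Longrightarrow> V \<Gamma> \<Delta>"
proof (induction rule: CLp.induct)
  case (init \<Gamma> \<Delta> A)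
  show ?case unfolding V_def
  proof (intro allI impI)
    fix C \<Theta> assume "is_base C" and h: "\<forall>X\<in>insert A \<Gamma>. supp C (Atom ` set (\<Theta> X) \<union> {X})"
    show "supp C (Atom ` (\<Union>X\<in>insert A \<Gamma>. set (\<Theta> X)) \<union> insert A \<Delta>)"
      by (rule supp_weak[OF h[rule_format, of A]]) (use init in auto)
  qed
next
  case (LBot \<Gamma> \<Delta>)
  show ?case unfolding V_def
  proof (intro allI impI)
    fix C \<Theta> assume "is_base C" and h: "\<forall>X\<in>insert Bot \<Gamma>. supp C (Atom ` set (\<Theta> X) \<union> {X})"
    have "supp C (insert Bot (Atom ` set (\<Theta> Bot)))" using h by auto
    then have "supp C (Atom ` set (\<Theta> Bot))" using supp_Bot by simp
    then show "supp C (Atom ` (\<Union>X\<in>insert Bot \<Gamma>. set (\<Theta> X)) \<union> \<Delta>)"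
      by (rule supp_weak) (use LBot in auto)
  qed
next
  case (RBot \<Gamma> \<Delta>)
  have f: "finite \<Gamma>" "finite \<Delta>" using CLp_fin[OF RBot(1)] by auto
  show ?case unfolding V_def
  proof (intro allI impI)
    fix C \<Theta> assume c: "is_base C" and h: "\<forall>X\<in>\<Gamma>. supp C (Atom ` set (\<Theta> X) \<union> {X})"
    show "supp C (Atom ` (\<Union>X\<in>\<Gamma>. set (\<Theta> X)) \<union> insert Bot \<Delta>)"
    proof (rule supp_weak)
      show "supp C (Atom ` (\<Union>X\<in>\<Gamma>. set (\<Theta> X)) \<union> \<Delta>)" using RBot(2) c h unfolding V_def by blast
    qed (use f in auto)
  qed
next
  case (LAnd A B \<Gamma> \<Delta>)
  have f: "finite \<Gamma>" "finite \<Delta>" using CLp_fin[OF LAnd(1)] by auto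
  show ?case unfolding V_def
  proof (intro allI impI)
    fix C \<Theta> assume c: "is_base C" and h: "\<forall>X\<in>insert (And A B) \<Gamma>. supp C (Atom ` set (\<Theta> X) \<union> {X})"
    define \<Theta>' where "\<Theta>' X = (if X \<in> insert (And A B) \<Gamma> then \<Theta> X else []) @
       (if X = A \<or> X = B then \<Theta> (And A B) else [])" for X
    have hAB: "supp C (insert A (Atom ` set (\<Theta> (And A B))))" "supp C (insert B (Atom ` set (\<Theta> (And A B))))"
      using h supp_And[of "Atom ` set (\<Theta> (And A B))" C A B] by auto
    have "\<forall>X\<in>insert A (insert B \<Gamma>). supp C (Atom ` set (\<Theta>' X) \<union> {X})"
    proof
      fix X assume X: "X \<in> insert A (insert B \<Gamma>)"
      show "supp C (Atom ` set (\<Theta>' X) \<union> {X})"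
      proof (cases "X \<in> \<Gamma>")
        case True
        show ?thesis by (rule supp_weak[OF h[rule_format, of X]]) (use True in \<open>auto simp: \<Theta>'_def\<close>)
      next
        case False
        then have "X = A \<or> X = B" using X by auto
        then show ?thesis
        proof
          assume XA: "X = A"
          show ?thesis by (rule supp_weak[OF hAB(1)]) (auto simp: \<Theta>'_def XA)
        next
          assume XB: "X = B"
          show ?thesis by (rule supp_weak[OF hAB(2)]) (auto simp: \<Theta>'_def XB)
        qed
      qed
    qed
    then have "supp C (Atom ` (\<Union>X\<in>insert A (insert B \<Gamma>). set (\<Theta>' X)) \<union> \<Delta>)"
      using LAnd(2) c unfolding V_def by blast
    then show "supp C (Atom ` (\<Union>X\<in>insert (And A B) \<Gamma>. set (\<Theta> X)) \<union> \<Delta>)"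
      by (rule supp_weak) (use f in \<open>auto simp: \<Theta>'_def split: if_splits\<close>)
  qed
next
  case (RAnd \<Gamma> A \<Delta> \<Gamma>' B \<Delta>')
  have f: "finite \<Gamma>" "finite \<Delta>" "finite \<Gamma>'" "finite \<Delta>'" using CLp_fin[OF RAnd(1)] CLp_fin[OF RAnd(2)] by auto
  show ?case unfolding V_def
  proof (intro allI impI)
    fix C \<Theta> assume c: "is_base C" and h: "\<forall>X\<in>\<Gamma> \<union> \<Gamma>'. supp C (Atom ` set (\<Theta> X) \<union> {X})"
    let ?W = "Atom ` (\<Union>X\<in>\<Gamma> \<union> \<Gamma>'. set (\<Theta> X)) \<union> (\<Delta> \<union> \<Delta>')"
    have fW: "finite ?W" using f by auto
    have 1: "supp C (Atom ` (\<Union>X\<in>\<Gamma>. set (\<Theta> X)) \<union> insert A \<Delta>)"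
      using RAnd(3) c h unfolding V_def by blast
    have 2: "supp C (Atom ` (\<Union>X\<in>\<Gamma>'. set (\<Theta> X)) \<union> insert B \<Delta>')"
      using RAnd(4) c h unfolding V_def by blast
    have "supp C (insert A ?W)" by (rule supp_weak[OF 1]) (use f in auto)
    moreover have "supp C (insert B ?W)" by (rule supp_weak[OF 2]) (use f in auto)
    ultimately have "supp C (insert (And A B) ?W)" using supp_And[OF fW] by simp
    then show "supp C (Atom ` (\<Union>X\<in>\<Gamma> \<union> \<Gamma>'. set (\<Theta> X)) \<union> insert (And A B) (\<Delta> \<union> \<Delta>'))"
      by simp
  qed
next
  case (LOr A \<Gamma> \<Delta> B \<Gamma>' \<Delta>')
  have f: "finite \<Gamma>" "finite \<Delta>" "finite \<Gamma>'" "finite \<Delta>'" using CLp_fin[OF LOr(1)] CLp_fin[OF LOr(2)] by auto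
  show ?case unfolding V_def
  proof (intro allI impI)
    fix C \<Theta> assume c: "is_base C" and h: "\<forall>X\<in>insert (Or A B) (\<Gamma> \<union> \<Gamma>'). supp C (Atom ` set (\<Theta> X) \<union> {X})"
    let ?P = "set (\<Theta> (Or A B))"
    let ?Z1 = "Atom ` (\<Union>X\<in>\<Gamma>. set (\<Theta> X)) \<union> \<Delta>"
    let ?Z2 = "Atom ` (\<Union>X\<in>\<Gamma>'. set (\<Theta> X)) \<union> \<Delta>'"
    have hG: "\<forall>X\<in>\<Gamma>. supp C (Atom ` set (\<Theta> X) \<union> {X})" "\<forall>X\<in>\<Gamma>'. supp C (Atom ` set (\<Theta> X) \<union> {X})"
      using h by auto
    have H1: "\<forall>C' (\<Theta>1::nat list). is_base C' \<and> C \<subseteq> C' \<longrightarrow> supp C' (Atom ` set \<Theta>1 \<union> {A}) \<longrightarrow> supp C' (Atom ` set \<Theta>1 \<union> ?Z1)"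
      using V_hyp[OF LOr(3) f(1,2) hG(1)] by blast
    have H2: "\<forall>C' (\<Theta>1::nat list). is_base C' \<and> C \<subseteq> C' \<longrightarrow> supp C' (Atom ` set \<Theta>1 \<union> {B}) \<longrightarrow> supp C' (Atom ` set \<Theta>1 \<union> ?Z2)"
      using V_hyp[OF LOr(4) f(3,4) hG(2)] by blast
    have "supp C (insert (Or A B) (Atom ` ?P))" using h by auto
    then have "supp C (Atom ` ?P \<union> insert A {B})" using supp_Or[of "Atom ` ?P" C A B] by (simp add: insert_commute)
    then have "supp C (Atom ` ?P \<union> {B} \<union> ?Z1)"
      by (rule cut[OF _ _ _ c _ H1, rotated 3]) (use f in auto)
    then have "supp C (Atom ` ?P \<union> insert B ?Z1)" by simp
    then have "supp C (Atom ` ?P \<union> ?Z1 \<union> ?Z2)"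
      by (rule cut[OF _ _ _ c _ H2, rotated 3]) (use f in auto)
    then show "supp C (Atom ` (\<Union>X\<in>insert (Or A B) (\<Gamma> \<union> \<Gamma>'). set (\<Theta> X)) \<union> (\<Delta> \<union> \<Delta>'))"
      by (rule supp_weak) (use f in auto)
  qed
next
  case (ROr \<Gamma> A B \<Delta>)
  have f: "finite \<Gamma>" "finite \<Delta>" using CLp_fin[OF ROr(1)] by auto
  show ?case unfolding V_def
  proof (intro allI impI)
    fix C \<Theta> assume c: "is_base C" and h: "\<forall>X\<in>\<Gamma>. supp C (Atom ` set (\<Theta> X) \<union> {X})"
    let ?W = "Atom ` (\<Union>X\<in>\<Gamma>. set (\<Theta> X)) \<union> \<Delta>"
    have fW: "finite ?W" using f by auto
    have "supp C (Atom ` (\<Union>X\<in>\<Gamma>. set (\<Theta> X)) \<union> insert A (insert B \<Delta>))"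
      using ROr(2) c h unfolding V_def by blast
    then have "supp C (insert (Or A B) ?W)" using supp_Or[OF fW] by simp
    then show "supp C (Atom ` (\<Union>X\<in>\<Gamma>. set (\<Theta> X)) \<union> insert (Or A B) \<Delta>)" by simp
  qed
next
  case (LImp \<Gamma> A \<Delta> B \<Gamma>' \<Delta>')
  have f: "finite \<Gamma>" "finite \<Delta>" "finite \<Gamma>'" "finite \<Delta>'" using CLp_fin[OF LImp(1)] CLp_fin[OF LImp(2)] by auto
  show ?case unfolding V_def
  proof (intro allI impI)
    fix C \<Theta> assume c: "is_base C" and h: "\<forall>X\<in>insert (Imp A B) (\<Gamma> \<union> \<Gamma>'). supp C (Atom ` set (\<Theta> X) \<union> {X})"
    let ?P = "set (\<Theta> (Imp A B))"
    let ?U = "\<Union>X\<in>\<Gamma>. set (\<Theta> X)"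
    let ?Z2 = "Atom ` (\<Union>X\<in>\<Gamma>'. set (\<Theta> X)) \<union> \<Delta>'"
    have hG: "\<forall>X\<in>\<Gamma>'. supp C (Atom ` set (\<Theta> X) \<union> {X})"
      using h by auto
    have H2: "\<forall>C' (\<Theta>1::nat list). is_base C' \<and> C \<subseteq> C' \<longrightarrow> supp C' (Atom ` set \<Theta>1 \<union> {B}) \<longrightarrow> supp C' (Atom ` set \<Theta>1 \<union> ?Z2)"
      using V_hyp[OF LImp(4) f(3,4) hG] by blast
    have "supp C (insert (Imp A B) (Atom ` ?P))" using h by auto
    then have hI: "\<forall>C' (\<Theta>1::nat list). is_base C' \<and> C \<subseteq> C' \<longrightarrow> supp C' (Atom ` set \<Theta>1 \<union> {A}) \<longrightarrow>
        supp C' (Atom ` set \<Theta>1 \<union> insert B (Atom ` ?P))" using supp_Imp[of "Atom ` ?P" C A B] by simp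
    have "supp C (Atom ` ?U \<union> insert A \<Delta>)" using LImp(3) c h unfolding V_def by auto
    then have "supp C (Atom ` ?U \<union> \<Delta> \<union> insert B (Atom ` ?P))"
      by (rule cut[OF _ _ _ c _ hI, rotated 3]) (use f in auto)
    then have "supp C (Atom ` (?U \<union> ?P) \<union> insert B \<Delta>)"
      by (rule supp_weak) (use f in auto)
    then have "supp C (Atom ` (?U \<union> ?P) \<union> \<Delta> \<union> ?Z2)"
      by (rule cut[OF _ _ _ c _ H2, rotated 3]) (use f in auto)
    then show "supp C (Atom ` (\<Union>X\<in>insert (Imp A B) (\<Gamma> \<union> \<Gamma>'). set (\<Theta> X)) \<union> (\<Delta> \<union> \<Delta>'))"
      by (rule supp_weak) (use f in auto)
  qed
next
  case (RImp A \<Gamma> B \<Delta>)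
  have f: "finite \<Gamma>" "finite \<Delta>" using CLp_fin[OF RImp(1)] by auto
  show ?case unfolding V_def
  proof (intro allI impI)
    fix C \<Theta> assume c: "is_base C" and h: "\<forall>X\<in>\<Gamma>. supp C (Atom ` set (\<Theta> X) \<union> {X})"
    let ?W = "Atom ` (\<Union>X\<in>\<Gamma>. set (\<Theta> X)) \<union> \<Delta>"
    have fW: "finite ?W" using f by auto
    have "supp C (insert (Imp A B) ?W)" unfolding supp_Imp[OF fW]
    proof (intro allI impI)
      fix C' :: "arule set" and \<Theta>1 :: "nat list"
      assume c': "is_base C' \<and> C \<subseteq> C'" and a: "supp C' (Atom ` set \<Theta>1 \<union> {A})"
      have "supp C' (Atom ` set \<Theta>1 \<union> (Atom ` (\<Union>X\<in>\<Gamma>. set (\<Theta> X)) \<union> insert B \<Delta>))"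
        using V_hyp[OF RImp(2) f(1) _ h c' a] f by simp
      then show "supp C' (Atom ` set \<Theta>1 \<union> insert B ?W)" by (simp add: Un_ac)
    qed
    then show "supp C (Atom ` (\<Union>X\<in>\<Gamma>. set (\<Theta> X)) \<union> insert (Imp A B) \<Delta>)" by simp
  qed
qed

theorem theorem2:
  fixes \<Gamma> \<Delta> :: "form set"
  assumes "finite \<Gamma>" and "finite \<Delta>" and "CLp \<Gamma> \<Delta>"
  shows "valid \<Gamma> \<Delta>"
proof -
  have v: "V \<Gamma> \<Delta>" using sound[OF assms(3)] .
  show ?thesis unfolding valid_def inf_def
  proof (intro allI impI)
    fix B assume b: "is_base B \<and> ST \<subseteq> B"
    show "if \<Gamma> = {} then supp B \<Delta>
     else (\<forall>\<C> (\<Theta>::form \<Rightarrow> nat list). is_base \<C> \<and> B \<subseteq> \<C> \<longrightarrow>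
             (\<forall>A\<in>\<Gamma>. supp \<C> (Atom ` set (\<Theta> A) \<union> {A})) \<longrightarrow>
             supp \<C> (Atom ` (\<Union>A\<in>\<Gamma>. set (\<Theta> A)) \<union> \<Delta>))"
    proof (cases "\<Gamma> = {}")
      case True
      then show ?thesis using v b unfolding V_def by auto
    next
      case False
      then show ?thesis using v unfolding V_def by auto
    qed
  qed
qed

end
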